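(* Let $p$ be a prime and $c_1,\dots,c_n$ distinct nonzero integers. Let $M(c_1,\dots,c_n)$ be the $n\times n$ matrix whose $(k,i)$ entry is $c_i^{p^{k-1}}$ ($k,i=1,\dots,n$). Then the columns of $M(c_1,\dots,c_n)$ are $\mathbb Z$-linearly independent in each of the following cases: (1) all $c_i$ are positive; (2) $p\neq2$ and the $|c_i|$ are distinct, i.e. $c_i\ne -c_j$ for all $i\ne j$. *)

theory Defs
  imports "HOL-Computational_Algebra.Primes"
begin

definition Mmat :: "nat \<Rightarrow> (nat \<Rightarrow> int) \<Rightarrow> nat \<Rightarrow> nat \<Rightarrow> int" where
  "Mmat p c k i = c i ^ (p ^ (k - 1))"

definition cols_Z_lin_indep :: "nat \<Rightarrow> (nat \<Rightarrow> nat \<Rightarrow> int) \<Rightarrow> bool" where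
  "cols_Z_lin_indep n A \<longleftrightarrow>
     (\<forall>a :: nat \<Rightarrow> int. (\<forall>k\<in>{1..n}. (\<Sum>i=1..n. a i * A k i) = 0) \<longrightarrow> (\<forall>i\<in>{1..n}. a i = 0))"

end

theory Submission imports Defs Complex_Main begin

lemma expsum_zeros:
  fixes m :: nat
  shows "\<And>a l t. inj_on l {..<m} \<Longrightarrow> (\<forall>j. Suc j < m \<longrightarrow> t j < t (Suc j)) \<Longrightarrow>
     (\<forall>j<m. (\<Sum>i<m. a i * exp (l i * t j)) = (0::real)) \<Longrightarrow> \<forall>i<m. a i = 0"
proof (induction m)
  case 0
  then show ?case by simp
next
  case (Suc m)
  define g where "g x = (\<Sum>i<Suc m. a i * exp ((l i - l m) * x))" for x
  define g' where "g' x = (\<Sum>i<Suc m. a i * (l i - l m) * exp ((l i - l m) * x))" for x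
  have der: "(g has_field_derivative g' x) (at x)" for x
    unfolding g_def g'_def
    by (auto intro!: derivative_eq_intros simp: algebra_simps)
  have gz: "g (t j) = 0" if "j < Suc m" for j
  proof -
    have "g (t j) = exp (- l m * t j) * (\<Sum>i<Suc m. a i * exp (l i * t j))"
      unfolding g_def by (simp add: sum_distrib_left algebra_simps flip: exp_add)
    then show ?thesis using Suc.prems(3) that by simp
  qed
  have "\<exists>s. t j < s \<and> s < t (Suc j) \<and> g' s = 0" if "j < m" for j
  proof -
    have "t j < t (Suc j)" using Suc.prems(2) that by simp
    moreover have "g (t j) = g (t (Suc j))" using gz that by simp
    moreover have "continuous_on {t j..t (Suc j)} g"
      using der by (meson DERIV_isCont continuous_at_imp_continuous_on)
    moreover have "\<And>x. g differentiable (at x)"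
      using der real_differentiable_def by blast
    ultimately obtain z where "t j < z" "z < t (Suc j)" "DERIV g z :> 0"
      using Rolle by blast
    then show ?thesis using der DERIV_unique by blast
  qed
  then obtain s where s: "\<And>j. j < m \<Longrightarrow> t j < s j \<and> s j < t (Suc j) \<and> g' (s j) = 0"
    by metis
  have inj': "inj_on (\<lambda>i. l i - l m) {..<m}"
    using Suc.prems(1) by (auto simp: inj_on_def)
  have mono': "\<forall>j. Suc j < m \<longrightarrow> s j < s (Suc j)"
  proof (intro allI impI)
    fix j assume "Suc j < m"
    then show "s j < s (Suc j)" using s[of j] s[of "Suc j"] by fastforce
  qed
  have z': "\<forall>j<m. (\<Sum>i<m. (a i * (l i - l m)) * exp ((l i - l m) * s j)) = 0"
  proof (intro allI impI)
    fix j assume "j < m"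
    then have "g' (s j) = 0" using s by blast
    then show "(\<Sum>i<m. (a i * (l i - l m)) * exp ((l i - l m) * s j)) = 0"
      unfolding g'_def by simp
  qed
  have "\<forall>i<m. a i * (l i - l m) = 0"
    using Suc.IH[OF inj' mono' z'] .
  moreover have "\<forall>i<m. l i \<noteq> l m"
    using Suc.prems(1) unfolding inj_on_def by (metis lessThan_iff less_Suc_eq less_irrefl)
  ultimately have am: "\<forall>i<m. a i = 0" by simp
  have "(\<Sum>i<Suc m. a i * exp (l i * t 0)) = 0" using Suc.prems(3) by blast
  then have "a m * exp (l m * t 0) = 0" using am by simp
  then have "a m = 0" by simp
  then show ?case using am less_Suc_eq by auto
qed

theorem lemma4p1:
  fixes p n :: nat and c :: "nat \<Rightarrow> int"
  assumes "prime p"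
    and "\<forall>i\<in>{1..n}. c i \<noteq> 0"
    and "inj_on c {1..n}"
    and "(\<forall>i\<in>{1..n}. c i > 0) \<or>
         (p \<noteq> 2 \<and> (\<forall>i\<in>{1..n}. \<forall>j\<in>{1..n}. i \<noteq> j \<longrightarrow> c i \<noteq> - c j))"
  shows "cols_Z_lin_indep n (Mmat p c)"
  unfolding cols_Z_lin_indep_def
proof (intro allI impI)
  fix a :: "nat \<Rightarrow> int"
  assume H: "\<forall>k\<in>{1..n}. (\<Sum>i=1..n. a i * Mmat p c k i) = 0"
  define sg where "sg i = (if c i > 0 then 1 else -1::real)" for i
  define l where "l i = ln \<bar>real_of_int (c (Suc i))\<bar>" for i
  define t where "t j = real p ^ j" for j
  define b where "b i = real_of_int (a (Suc i)) * sg (Suc i)" for i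
  have p2: "p \<ge> 2" using assms(1) prime_ge_2_nat by blast
  have key: "real_of_int (c i ^ N) = sg i * exp (ln \<bar>real_of_int (c i)\<bar> * real N)"
    if "i \<in> {1..n}" "N = p ^ k" for i N k
  proof -
    have c0: "c i \<noteq> 0" using assms(2) that by blast
    have e: "exp (ln \<bar>real_of_int (c i)\<bar> * real N) = \<bar>real_of_int (c i)\<bar> ^ N"
    proof -
      have pos: "\<bar>real_of_int (c i)\<bar> > 0" using c0 by simp
      have "exp (ln \<bar>real_of_int (c i)\<bar> * real N) = \<bar>real_of_int (c i)\<bar> powr real N"
        using pos by (simp add: powr_def mult.commute)
      also have "\<dots> = \<bar>real_of_int (c i)\<bar> ^ N" using pos by (rule powr_realpow)
      finally show ?thesis .
    qed
    show ?thesis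
    proof (cases "c i > 0")
      case True
      then show ?thesis using e by (simp add: sg_def)
    next
      case False
      then have "p \<noteq> 2" using assms(4) that by auto
      then have "odd p" using assms(1) p2 by (intro prime_odd_nat) auto
      then have "odd N" using that by simp
      moreover have "real_of_int (c i) = - \<bar>real_of_int (c i)\<bar>" using False by simp
      ultimately have "real_of_int (c i) ^ N = - (\<bar>real_of_int (c i)\<bar> ^ N)"
        by (metis power_minus_odd)
      then show ?thesis using e False by (simp add: sg_def)
    qed
  qed
  have inj: "inj_on l {..<n}"
  proof (rule inj_onI)
    fix x y assume xy: "x \<in> {..<n}" "y \<in> {..<n}" "l x = l y"
    have sx: "Suc x \<in> {1..n}" "Suc y \<in> {1..n}" using xy(1,2) by auto
    have cx: "c (Suc x) \<noteq> 0" "c (Suc y) \<noteq> 0" using assms(2) sx by blast+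
    then have "\<bar>c (Suc x)\<bar> = \<bar>c (Suc y)\<bar>" using xy(3) unfolding l_def
      by (simp add: ln_inj_iff)
    then have "c (Suc x) = c (Suc y) \<or> c (Suc x) = - c (Suc y)" by (auto simp: abs_if split: if_splits)
    then show "x = y"
    proof
      assume "c (Suc x) = c (Suc y)"
      then have "Suc x = Suc y" by (rule inj_onD[OF assms(3) _ sx])
      then show ?thesis by simp
    next
      assume m: "c (Suc x) = - c (Suc y)"
      show ?thesis
      proof (rule ccontr)
        assume "x \<noteq> y"
        have nopos: "\<not> (c (Suc x) > 0 \<and> c (Suc y) > 0)" using m by linarith
        have "Suc x \<noteq> Suc y" using \<open>x \<noteq> y\<close> by simp
        have "c (Suc x) \<noteq> - c (Suc y)" if "\<forall>i\<in>{1..n}. \<forall>j\<in>{1..n}. i \<noteq> j \<longrightarrow> c i \<noteq> - c j"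
          using that[rule_format, OF sx(1) sx(2) \<open>Suc x \<noteq> Suc y\<close>] .
        then have "\<not> (p \<noteq> 2 \<and> (\<forall>i\<in>{1..n}. \<forall>j\<in>{1..n}. i \<noteq> j \<longrightarrow> c i \<noteq> - c j))"
          using m by auto
        moreover have "\<not> (\<forall>i\<in>{1..n}. c i > 0)" using nopos sx by auto
        ultimately show False using assms(4) by blast
      qed
    qed
  qed
  have mono: "\<forall>j. Suc j < n \<longrightarrow> t j < t (Suc j)"
    using p2 by (auto simp: t_def)
  have z: "\<forall>j<n. (\<Sum>i<n. b i * exp (l i * t j)) = 0"
  proof (intro allI impI)
    fix j assume j: "j < n"
    have "0 = real_of_int (\<Sum>i=1..n. a i * Mmat p c (Suc j) i)"
      using H j by simp
    also have "\<dots> = (\<Sum>i=1..n. real_of_int (a i) * real_of_int (c i ^ p ^ j))"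
      by (simp add: Mmat_def)
    also have "\<dots> = (\<Sum>i=1..n. real_of_int (a i) * (sg i * exp (ln \<bar>real_of_int (c i)\<bar> * real (p ^ j))))"
      by (rule sum.cong) (use key in auto)
    also have "\<dots> = (\<Sum>i<n. b i * exp (l i * t j))"
      unfolding b_def l_def t_def
    proof (induction n)
      case (Suc n)
      then show ?case by (simp add: algebra_simps)
    qed simp
    finally show "(\<Sum>i<n. b i * exp (l i * t j)) = 0" by simp
  qed
  have "\<forall>i<n. b i = 0" using expsum_zeros[OF inj mono z] .
  then show "\<forall>i\<in>{1..n}. a i = 0"
  proof (intro ballI)
    fix i assume i: "i \<in> {1..n}"
    then obtain k where k: "i = Suc k" "k < n" by (cases i) auto
    have "b k = 0" using \<open>\<forall>i<n. b i = 0\<close> k by blast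
    then show "a i = 0" using k by (simp add: b_def sg_def split: if_splits)
  qed
qed

end
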